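(* Let $f$ and $\ell$ be continuous and $\mathbb{X}\times\mathbb{U}$ be compact, and let strict dissipativity hold, i.e., there exist a bounded storage function $\lambda:\mathbb{X}\to\mathbb{R}$ and $\underline\alpha_{\tilde\ell}\in\mathcal{K}_\infty$ such that $\tilde\ell(x,u)=\ell(x,u)-\ell^\star+\lambda(x)-\lambda(f(x,u))\geq\underline\alpha_{\tilde\ell}(\|(x,u)\|_{\Pi^\star})$ for all $x\in\mathbb{X}$ and all $u\in\mathbb{U}$ with $f(x,u)\in\mathbb{X}$. Then there exists $\alpha_1\in\mathcal{K}_\infty$ such that for all $\varepsilon>0$ and all trajectories of length $T$ defined by $\hat x\in\mathbb{X}$ and $\hat u\in\mathbb{U}^T(\hat x)$ satisfying $\|(x_{\hat u}(k,\hat x),\hat u(k))\|_{\Pi^\star}\leq\varepsilon$ for all $k\in\{0,\dots,T-1\}$, it holds that \[ \sum_{k=0}^{T-1}\ell(x_{\hat u}(k,\hat x),\hat u(k))\leq (T+p^\star-1)\ell^\star+T\alpha_1(\varepsilon). \]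
   Context: System $x(k+1)=f(x(k),u(k))$ with constraints $x\in\mathbb{X}$, $u\in\mathbb{U}$, stage cost $\ell$; $x_u(k,x)$ is the state trajectory under input sequence $u$ from $x$, and $\mathbb{U}^T(x)$ the set of feasible input sequences of length $T$. A feasible $p$-periodic orbit is a $p$-tuple $\Pi\in(\mathbb{X}\times\mathbb{U})^p$ with $\Pi_{\mathbb{X}}((k+1)\bmod p)=f(\Pi(k))$; $\|(x,u)\|_\Pi=\min_k\|(x,u)-\Pi(k)\|$. $\ell^\star$ is the infimum over all feasible periodic orbits of the average cost $\frac1p\sum_{k=0}^{p-1}\ell(\Pi(k))$, and $\Pi^\star$ is an optimal orbit of period $p^\star$ attaining it. The stage cost $\ell$ is assumed non-negative without loss of generality (shifting $\ell$ by its minimum on the compact set does not change minimizers). *)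

theory Defs
  imports "HOL-Analysis.Analysis"
begin

fun traj :: "('x \<Rightarrow> 'u \<Rightarrow> 'x) \<Rightarrow> (nat \<Rightarrow> 'u) \<Rightarrow> 'x \<Rightarrow> nat \<Rightarrow> 'x" where
  "traj f u x 0 = x"
| "traj f u x (Suc k) = f (traj f u x k) (u k)"

definition feasible_inputs ::
  "'x set \<Rightarrow> 'u set \<Rightarrow> ('x \<Rightarrow> 'u \<Rightarrow> 'x) \<Rightarrow> nat \<Rightarrow> 'x \<Rightarrow> (nat \<Rightarrow> 'u) set" where
  "feasible_inputs X U f T x =
     {u. (\<forall>k<T. u k \<in> U) \<and> (\<forall>k\<le>T. traj f u x k \<in> X)}"

definition feasible_orbit ::
  "'x set \<Rightarrow> 'u set \<Rightarrow> ('x \<Rightarrow> 'u \<Rightarrow> 'x) \<Rightarrow> nat \<Rightarrow> (nat \<Rightarrow> 'x \<times> 'u) \<Rightarrow> bool" where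
  "feasible_orbit X U f p Orb \<longleftrightarrow> p > 0 \<and>
     (\<forall>k<p. fst (Orb k) \<in> X \<and> snd (Orb k) \<in> U) \<and>
     (\<forall>k<p. fst (Orb (Suc k mod p)) = f (fst (Orb k)) (snd (Orb k)))"

definition avg_cost :: "('x \<Rightarrow> 'u \<Rightarrow> real) \<Rightarrow> nat \<Rightarrow> (nat \<Rightarrow> 'x \<times> 'u) \<Rightarrow> real" where
  "avg_cost l p Orb = (\<Sum>k<p. l (fst (Orb k)) (snd (Orb k))) / real p"

definition ell_star ::
  "'x set \<Rightarrow> 'u set \<Rightarrow> ('x \<Rightarrow> 'u \<Rightarrow> 'x) \<Rightarrow> ('x \<Rightarrow> 'u \<Rightarrow> real) \<Rightarrow> real" where
  "ell_star X U f l = Inf {avg_cost l p Orb | p Orb. feasible_orbit X U f p Orb}"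

definition orbit_dist ::
  "nat \<Rightarrow> (nat \<Rightarrow> 'a::real_normed_vector) \<Rightarrow> 'a \<Rightarrow> real" where
  "orbit_dist p Orb z = Min ((\<lambda>k. norm (z - Orb k)) ` {..<p})"

definition class_Kinf :: "(real \<Rightarrow> real) \<Rightarrow> bool" where
  "class_Kinf a \<longleftrightarrow> a 0 = 0 \<and> continuous_on {0..} a \<and> strict_mono_on {0..} a
     \<and> filterlim a at_top at_top"

end

theory Submission
  imports Defs
begin

lemma finite_delta:
  fixes c :: "nat \<Rightarrow> 'a::metric_space"
  assumes "\<And>j. j < p \<Longrightarrow> \<exists>d>0. \<forall>z\<in>K. dist z (c j) < d \<longrightarrow> Q j z"
  shows "\<exists>d>0. \<forall>j<p. \<forall>z\<in>K. dist z (c j) < d \<longrightarrow> Q j z"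
  using assms
proof (induction p)
  case 0
  show ?case by (auto intro: exI[of _ 1])
next
  case (Suc p)
  obtain d1 where d1: "d1 > 0" "\<forall>j<p. \<forall>z\<in>K. dist z (c j) < d1 \<longrightarrow> Q j z"
    using Suc by auto
  obtain d2 where d2: "d2 > 0" "\<forall>z\<in>K. dist z (c p) < d2 \<longrightarrow> Q p z"
    using Suc.prems[of p] by auto
  show ?case
    apply (rule exI[of _ "min d1 d2"])
    using d1 d2 by (auto simp: less_Suc_eq)
qed

lemma orbit_dist_attained:
  assumes "0 < p" shows "\<exists>j<p. orbit_dist p Orb z = norm (z - Orb j)"
proof -
  have "orbit_dist p Orb z \<in> (\<lambda>k. norm (z - Orb k)) ` {..<p}"
    unfolding orbit_dist_def using assms by (intro Min_in) auto
  then show ?thesis by auto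
qed

lemma telescope:
  "(\<forall>k<n. A k = B (Suc k)) \<Longrightarrow> (\<Sum>k<Suc n. (A k - B k)::real) = A n - B 0"
  by (induction n) auto

lemma sum_shift_mod:
  assumes "0 < p" shows "(\<Sum>j<p. g (Suc j mod p)) = (\<Sum>j<p. (g j :: real))"
proof -
  obtain q where q: "p = Suc q" using assms by (cases p) auto
  have "(\<Sum>j<Suc q. g (Suc j mod Suc q)) = (\<Sum>j<q. g (Suc j mod Suc q)) + g 0"
    by simp
  also have "(\<Sum>j<q. g (Suc j mod Suc q)) = (\<Sum>j<q. g (Suc j))"
    by (rule sum.cong) auto
  also have "(\<Sum>j<q. g (Suc j)) + g 0 = (\<Sum>j<Suc q. g j)"
    unfolding sum.lessThan_Suc_shift by (simp add: add.commute)
  finally show ?thesis using q by simp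
qed

lemma kinf_construct:
  fixes c :: "nat \<Rightarrow> real"
  assumes cn: "\<And>n. 0 \<le> c n" and cs: "\<And>e. e > 0 \<Longrightarrow> \<exists>n. c n \<le> e" and Lc: "Lc > 0"
  defines "g \<equiv> \<lambda>s. (INF n. c n + real n * s)"
  shows "class_Kinf (\<lambda>s. g s + Lc * s)"
    and "\<And>s n. 0 \<le> s \<Longrightarrow> g s \<le> c n + real n * s"
    and "\<And>s t. 0 \<le> s \<Longrightarrow> (\<And>n. t \<le> c n + real n * s) \<Longrightarrow> t \<le> g s"
    and "\<And>s. 0 \<le> s \<Longrightarrow> 0 \<le> g s"
proof -
  have bdd: "bdd_below (range (\<lambda>n. c n + real n * s))" if "0 \<le> s" for s
    using cn that by (intro bdd_belowI[of _ 0]) (auto intro: add_nonneg_nonneg)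
  show gle: "g s \<le> c n + real n * s" if "0 \<le> s" for s n
    unfolding g_def by (rule cINF_lower[OF bdd[OF that]]) simp
  show gge: "t \<le> g s" if "0 \<le> s" "\<And>n. t \<le> c n + real n * s" for s t
    unfolding g_def by (rule cINF_greatest) (use that in auto)
  show gnn: "0 \<le> g s" if "0 \<le> s" for s
    using that cn by (intro gge) (auto intro: add_nonneg_nonneg)
  have g0: "g 0 = 0"
  proof (rule antisym)
    show "0 \<le> g 0" using gnn by simp
    show "g 0 \<le> 0"
    proof (rule ccontr)
      assume "\<not> g 0 \<le> 0"
      then obtain n where "c n \<le> g 0 / 2" using cs[of "g 0 / 2"] by auto
      moreover have "g 0 \<le> c n" using gle[of 0 n] by simp
      ultimately show False using \<open>\<not> g 0 \<le> 0\<close> by simp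
    qed
  qed
  have gmono: "g s \<le> g t" if "0 \<le> s" "s \<le> t" for s t
  proof (rule gge)
    show "0 \<le> t" using that by simp
    fix n
    have "g s \<le> c n + real n * s" using gle that by simp
    also have "\<dots> \<le> c n + real n * t" using that by (simp add: mult_left_mono)
    finally show "g s \<le> c n + real n * t" .
  qed
  have conc: "convex_on {0<..} (\<lambda>s. - g s)"
  proof (rule convex_onI)
    show "convex ({0<..} :: real set)" by simp
    fix t x y :: real assume t: "0 < t" "t < 1" and xy: "x \<in> {0<..}" "y \<in> {0<..}"
    have "(1 - t) * g x + t * g y \<le> g ((1 - t) *\<^sub>R x + t *\<^sub>R y)"
    proof (rule gge)
      show "0 \<le> (1 - t) *\<^sub>R x + t *\<^sub>R y" using t xy by simp
      fix n
      have "(1 - t) * g x \<le> (1 - t) * (c n + real n * x)"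
        using t xy gle[of x n] by (intro mult_left_mono) auto
      moreover have "t * g y \<le> t * (c n + real n * y)"
        using t xy gle[of y n] by (intro mult_left_mono) auto
      ultimately show "(1 - t) * g x + t * g y \<le> c n + real n * ((1 - t) *\<^sub>R x + t *\<^sub>R y)"
        by (simp add: algebra_simps)
    qed
    then show "- g ((1 - t) *\<^sub>R x + t *\<^sub>R y) \<le> (1 - t) * - g x + t * - g y" by simp
  qed
  have cpos: "continuous_on {0<..} (\<lambda>s. - g s)"
    by (rule convex_on_continuous[OF _ conc]) simp
  then have cpos': "continuous_on {0<..} g"
    using continuous_on_minus[OF cpos] by simp
  have contg: "continuous_on {0..} g"
    unfolding continuous_on_eq_continuous_within
  proof
    fix x :: real assume x: "x \<in> {0..}"
    show "continuous (at x within {0..}) g"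
    proof (cases "x = 0")
      case False
      then have "x \<in> {0<..}" using x by simp
      then have "continuous (at x) g"
        using cpos' continuous_on_eq_continuous_at[of "{0<..}" g] by auto
      then show ?thesis by (rule continuous_at_imp_continuous_within)
    next
      case True
      show ?thesis unfolding True continuous_within_eps_delta
      proof (intro allI impI)
        fix e :: real assume e: "e > 0"
        obtain n where n: "c n \<le> e / 2" using cs[of "e/2"] e by auto
        show "\<exists>d>0. \<forall>x'\<in>{0..}. dist x' 0 < d \<longrightarrow> dist (g x') (g 0) < e"
        proof (intro exI[of _ "e / (2 * (real n + 1))"] conjI ballI impI)
          show "0 < e / (2 * (real n + 1))" using e by simp
          fix x' :: real assume x': "x' \<in> {0..}" "dist x' 0 < e / (2 * (real n + 1))"
          then have x'0: "0 \<le> x'" "x' < e / (2 * (real n + 1))" by auto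
          then have "(real n + 1) * x' < e / 2"
            by (simp add: field_simps)
          then have "real n * x' < e / 2" using x'0 by (simp add: algebra_simps)
          then have "g x' < e" using gle[of x' n] n x'0 by simp
          then show "dist (g x') (g 0) < e" using g0 gnn[of x'] x'0 by (simp add: dist_real_def)
        qed
      qed
    qed
  qed
  show "class_Kinf (\<lambda>s. g s + Lc * s)"
    unfolding class_Kinf_def
  proof (intro conjI)
    show "g 0 + Lc * 0 = 0" using g0 by simp
    show "continuous_on {0..} (\<lambda>s. g s + Lc * s)"
      by (intro continuous_intros contg)
    show "strict_mono_on {0..} (\<lambda>s. g s + Lc * s)"
      by (rule strict_mono_onI) (use gmono Lc in \<open>auto intro: add_le_less_mono\<close>)
    have "filterlim (\<lambda>s. Lc * s) at_top at_top"
      using Lc by (intro filterlim_tendsto_pos_mult_at_top[OF tendsto_const] filterlim_ident) auto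
    then show "filterlim (\<lambda>s. g s + Lc * s) at_top at_top"
      by (rule filterlim_at_top_mono)
        (use gnn in \<open>auto simp: eventually_at_top_linorder intro: exI[of _ 0]\<close>)
  qed
qed


theorem lemma26:
  fixes X :: "'x::real_normed_vector set" and U :: "'u::real_normed_vector set"
    and f :: "'x \<Rightarrow> 'u \<Rightarrow> 'x" and l :: "'x \<Rightarrow> 'u \<Rightarrow> real"
    and Pis :: "nat \<Rightarrow> 'x \<times> 'u" and ps :: nat
    and lam :: "'x \<Rightarrow> real" and alpha :: "real \<Rightarrow> real"
  assumes cont_f: "continuous_on (X \<times> U) (\<lambda>(x, u). f x u)"
    and cont_l: "continuous_on (X \<times> U) (\<lambda>(x, u). l x u)"
    and cpt: "compact (X \<times> U)"
    and l_nonneg: "\<forall>x\<in>X. \<forall>u\<in>U. 0 \<le> l x u"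
    and orbit: "feasible_orbit X U f ps Pis"
    and optimal: "avg_cost l ps Pis = ell_star X U f l"
    and lam_bdd: "bounded (lam ` X)"
    and alpha_K: "class_Kinf alpha"
    and dissip: "\<forall>x\<in>X. \<forall>u\<in>U. f x u \<in> X \<longrightarrow>
        l x u - ell_star X U f l + lam x - lam (f x u) \<ge> alpha (orbit_dist ps Pis (x, u))"
  shows "\<exists>alpha1. class_Kinf alpha1 \<and>
    (\<forall>eps>0. \<forall>T xh uh. xh \<in> X \<longrightarrow> uh \<in> feasible_inputs X U f T xh \<longrightarrow>
       (\<forall>k<T. orbit_dist ps Pis (traj f uh xh k, uh k) \<le> eps) \<longrightarrow>
       (\<Sum>k<T. l (traj f uh xh k) (uh k))
         \<le> (real T + real ps - 1) * ell_star X U f l + real T * alpha1 eps)"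
proof -
  define e where "e = ell_star X U f l"
  define K where "K = X \<times> U"
  define L' where "L' = (\<lambda>z::'x\<times>'u. l (fst z) (snd z))"
  have p0: "ps > 0" using orbit unfolding feasible_orbit_def by auto
  have orbK: "Pis j \<in> K" if "j < ps" for j
    using orbit that unfolding feasible_orbit_def K_def by (auto simp: mem_Times_iff)
  have orbf: "f (fst (Pis j)) (snd (Pis j)) = fst (Pis (Suc j mod ps))" if "j < ps" for j
    using orbit that unfolding feasible_orbit_def by auto
  have contL: "continuous_on K L'"
    using cont_l unfolding K_def L'_def by (simp add: case_prod_beta')
  have contF: "continuous_on K (\<lambda>z. f (fst z) (snd z))"
    using cont_f unfolding K_def by (simp add: case_prod_beta')
  have LK: "0 \<le> L' z" if "z \<in> K" for z
    using l_nonneg that unfolding K_def L'_def by (auto simp: mem_Times_iff)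
  obtain M0 where M0: "\<forall>z\<in>K. norm (L' z) \<le> M0"
    using compact_imp_bounded[OF compact_continuous_image[OF contL cpt[folded K_def]]]
    unfolding bounded_iff by auto
  define M where "M = max M0 0"
  have M: "\<And>z. z \<in> K \<Longrightarrow> L' z \<le> M" "0 \<le> M"
    using M0 unfolding M_def by (auto intro: le_max_iff_disj[THEN iffD2] dest!: bspec simp: abs_le_iff)
  have sumorb: "(\<Sum>j<ps. L' (Pis j)) = real ps * e"
    using optimal p0 unfolding avg_cost_def e_def L'_def by (simp add: field_simps)
  have e_nonneg: "0 \<le> e"
  proof -
    have "0 \<le> (\<Sum>j<ps. L' (Pis j))" by (intro sum_nonneg LK orbK) auto
    then show ?thesis using sumorb p0 by (simp add: zero_le_mult_iff)
  qed
  have alpha_nonneg: "0 \<le> alpha t" if "0 \<le> t" for t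
  proof (cases "t = 0")
    case True then show ?thesis using alpha_K by (simp add: class_Kinf_def)
  next
    case False
    then have "alpha 0 < alpha t" using alpha_K that
      unfolding class_Kinf_def by (metis atLeast_iff order_less_le order_refl strict_mono_onD)
    then show ?thesis using alpha_K by (simp add: class_Kinf_def)
  qed
  have od_nonneg: "0 \<le> orbit_dist ps Pis z" for z
    using orbit_dist_attained[OF p0, of Pis z] by auto
  have F2: "L' (Pis j) = e + lam (fst (Pis (Suc j mod ps))) - lam (fst (Pis j))" if "j < ps" for j
  proof -
    define d where "d j = L' (Pis j) - e + lam (fst (Pis j)) - lam (fst (Pis (Suc j mod ps)))" for j
    have dn: "\<forall>j\<in>{..<ps}. 0 \<le> d j"
    proof
      fix j assume j: "j \<in> {..<ps}"
      have "fst (Pis j) \<in> X" "snd (Pis j) \<in> U" using orbK[of j] j by (auto simp: K_def mem_Times_iff)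
      moreover have "f (fst (Pis j)) (snd (Pis j)) \<in> X"
        using orbf[of j] orbK[of "Suc j mod ps"] j p0 by (auto simp: K_def mem_Times_iff)
      ultimately have "alpha (orbit_dist ps Pis (fst (Pis j), snd (Pis j))) \<le> d j"
        using dissip[rule_format, of "fst (Pis j)" "snd (Pis j)"] orbf[of j] j
        unfolding d_def e_def L'_def by simp
      then show "0 \<le> d j" using alpha_nonneg[OF od_nonneg] by (meson order_trans)
    qed
    have "(\<Sum>j<ps. d j) = (\<Sum>j<ps. L' (Pis j)) - real ps * e + (\<Sum>j<ps. lam (fst (Pis j)))
        - (\<Sum>j<ps. lam (fst (Pis (Suc j mod ps))))"
      unfolding d_def by (simp add: sum.distrib sum_subtractf)
    also have "\<dots> = 0" using sumorb sum_shift_mod[OF p0, of "\<lambda>j. lam (fst (Pis j))"] by simp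
    finally have "(\<Sum>j<ps. d j) = 0" .
    then have "d j = 0" using sum_nonneg_eq_0_iff[of "{..<ps}" d] dn that by auto
    then show ?thesis unfolding d_def by simp
  qed
  have walk: "(\<Sum>i<m. L' (Pis ((a + i) mod ps))) = real m * e + lam (fst (Pis ((a + m) mod ps)))
      - lam (fst (Pis (a mod ps)))" for a m
  proof (induction m)
    case 0 then show ?case by simp
  next
    case (Suc m)
    have "L' (Pis ((a + m) mod ps)) = e + lam (fst (Pis (Suc ((a + m) mod ps) mod ps)))
        - lam (fst (Pis ((a + m) mod ps)))"
      using F2[of "(a + m) mod ps"] p0 by simp
    also have "Suc ((a + m) mod ps) mod ps = (a + Suc m) mod ps" by (simp add: mod_Suc_eq)
    finally show ?case using Suc by (simp add: algebra_simps)
  qed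
  have F3: "lam (fst (Pis a)) - lam (fst (Pis b)) \<le> (real ps - 1) * e" if "a < ps" "b < ps" for a b
  proof -
    define m where "m = (b + ps - a) mod ps"
    have m: "m < ps" using p0 unfolding m_def by simp
    have abm: "(a + m) mod ps = b" using that unfolding m_def by (simp add: mod_add_right_eq)
    have "0 \<le> (\<Sum>i<m. L' (Pis ((a + i) mod ps)))"
      by (intro sum_nonneg LK orbK) (use p0 in auto)
    then have "lam (fst (Pis a)) - lam (fst (Pis b)) \<le> real m * e"
      using walk[of a m] abm that by simp
    also have "\<dots> \<le> (real ps - 1) * e" using m e_nonneg by (intro mult_right_mono) auto
    finally show ?thesis .
  qed
  define V where "V n = {L' z - L' (Pis j) - real n * norm (z - Pis j) | z j. z \<in> K \<and> j < ps}" for n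
  define c where "c n = Sup (V n)" for n
  have V0: "0 \<in> V n" for n
    proof -
    have "L' (Pis 0) - L' (Pis 0) - real n * norm (Pis 0 - Pis 0) \<in> V n"
      unfolding V_def using orbK[of 0] p0 by blast
    then show ?thesis by simp
  qed
  have Vbdd: "bdd_above (V n)" for n
    unfolding V_def
  proof (rule bdd_aboveI[of _ M], clarify)
    fix z j assume "z \<in> K" "j < ps"
    then show "L' z - L' (Pis j) - real n * norm (z - Pis j) \<le> M"
    proof -
      have "0 \<le> real n * norm (z - Pis j)" by simp
      then show ?thesis using M(1)[of z] LK[OF orbK[of j]] \<open>z \<in> K\<close> \<open>j < ps\<close> by linarith
    qed
  qed
  have c_ge: "L' z - L' (Pis j) - real n * norm (z - Pis j) \<le> c n" if "z \<in> K" "j < ps" for n z j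
    unfolding c_def by (rule cSup_upper[OF _ Vbdd]) (unfold V_def, use that in blast)
  have c_nonneg: "0 \<le> c n" for n
    unfolding c_def by (rule cSup_upper[OF V0 Vbdd])
  have c_small: "\<exists>n. c n \<le> eps" if eps: "eps > 0" for eps
  proof -
    have "\<exists>d>0. \<forall>j<ps. \<forall>z\<in>K. dist z (Pis j) < d \<longrightarrow> L' z - L' (Pis j) < eps"
    proof (rule finite_delta)
      fix j assume "j < ps"
      then obtain d where "d > 0" "\<forall>z\<in>K. dist z (Pis j) < d \<longrightarrow> dist (L' z) (L' (Pis j)) < eps"
        using contL orbK eps unfolding continuous_on_iff by metis
      then show "\<exists>d>0. \<forall>z\<in>K. dist z (Pis j) < d \<longrightarrow> L' z - L' (Pis j) < eps"
        by (auto simp: dist_real_def abs_less_iff)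
    qed
    then obtain d where d: "d > 0" "\<forall>j<ps. \<forall>z\<in>K. dist z (Pis j) < d \<longrightarrow> L' z - L' (Pis j) < eps"
      by auto
    obtain n where n: "M / d < real n" using reals_Archimedean2 by blast
    have "c n \<le> eps" unfolding c_def
    proof (rule cSup_least)
      show "V n \<noteq> {}" using V0 by auto
      fix v assume "v \<in> V n"
      then obtain z j where zj: "z \<in> K" "j < ps" "v = L' z - L' (Pis j) - real n * norm (z - Pis j)"
        unfolding V_def by auto
      show "v \<le> eps"
      proof (cases "norm (z - Pis j) < d")
        case True
        then have "L' z - L' (Pis j) < eps" using d zj by (auto simp: dist_norm)
        moreover have "0 \<le> real n * norm (z - Pis j)" by simp
        ultimately show ?thesis using zj by linarith
      next
        case False
        have "M < real n * d" using n d by (simp add: field_simps)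
        also have "\<dots> \<le> real n * norm (z - Pis j)" using False by (intro mult_left_mono) auto
        finally show ?thesis using zj M(1)[OF zj(1)] LK[OF orbK[OF zj(2)]] eps by linarith
      qed
    qed
    then show ?thesis by blast
  qed
  define g where "g = (\<lambda>s. (INF n. c n + real n * s))"
  have c_small': "\<And>e. e > 0 \<Longrightarrow> \<exists>n. c n \<le> e" using c_small by blast
  have kc1: "class_Kinf (\<lambda>s. g s + Lc * s)" if "Lc > 0" for Lc
    unfolding g_def by (rule kinf_construct(1)[OF c_nonneg c_small' that])
  have kc3: "t \<le> g s" if "0 \<le> s" "\<And>n. t \<le> c n + real n * s" for s t
    unfolding g_def by (rule kinf_construct(3)[OF c_nonneg c_small' zero_less_one that])
  have kc4: "0 \<le> g s" if "0 \<le> s" for s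
    unfolding g_def by (rule kinf_construct(4)[OF c_nonneg c_small' zero_less_one that])
  have key: "L' z \<le> L' (Pis j) + g s" if "z \<in> K" "j < ps" "norm (z - Pis j) \<le> s" for z j s
  proof -
    have s0: "0 \<le> s" using that(3) norm_ge_zero order_trans by blast
    have "L' z - L' (Pis j) \<le> g s"
    proof (rule kc3[OF s0])
      fix n
      have "L' z - L' (Pis j) \<le> c n + real n * norm (z - Pis j)" using c_ge[OF that(1,2), of n] by simp
      also have "\<dots> \<le> c n + real n * s" using that(3) by (simp add: mult_left_mono)
      finally show "L' z - L' (Pis j) \<le> c n + real n * s" .
    qed
    then show ?thesis by simp
  qed
  define D where "D = {norm (fst (Pis a) - fst (Pis b)) | a b. a < ps \<and> b < ps \<and> fst (Pis a) \<noteq> fst (Pis b)}"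
  define sep where "sep = Min (insert 1 D)"
  have finD: "finite D"
  proof (rule finite_subset)
    show "D \<subseteq> (\<lambda>(a, b). norm (fst (Pis a) - fst (Pis b))) ` ({..<ps} \<times> {..<ps})"
      unfolding D_def by auto
  qed auto
  have sep_pos: "0 < sep" unfolding sep_def using finD by (auto simp: D_def)
  have sep_le: "sep \<le> norm (fst (Pis a) - fst (Pis b))"
    if "a < ps" "b < ps" "fst (Pis a) \<noteq> fst (Pis b)" for a b
    unfolding sep_def using finD that by (intro Min_le) (auto simp: D_def)
  have "\<exists>d>0. \<forall>j<ps. \<forall>z\<in>K. dist z (Pis j) < d \<longrightarrow>
      dist (f (fst z) (snd z)) (f (fst (Pis j)) (snd (Pis j))) < sep / 2"
  proof (rule finite_delta)
    fix j assume "j < ps"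
    then show "\<exists>d>0. \<forall>z\<in>K. dist z (Pis j) < d \<longrightarrow>
      dist (f (fst z) (snd z)) (f (fst (Pis j)) (snd (Pis j))) < sep / 2"
      using contF orbK sep_pos unfolding continuous_on_iff by (meson half_gt_zero)
  qed
  then obtain eta where eta: "eta > 0" "\<forall>j<ps. \<forall>z\<in>K. dist z (Pis j) < eta \<longrightarrow>
      dist (f (fst z) (snd z)) (f (fst (Pis j)) (snd (Pis j))) < sep / 2" by auto
  define del where "del = min eta (sep / 2)"
  have del: "0 < del" using eta sep_pos unfolding del_def by simp
  define Lc where "Lc = M / del + 1"
  have Lc: "0 < Lc" using divide_nonneg_pos[OF M(2) del] unfolding Lc_def by linarith
  define a1 where "a1 = (\<lambda>s. g s + Lc * s)"
  have a1K: "class_Kinf a1" unfolding a1_def using kc1[OF Lc] .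
  show ?thesis
  proof (intro exI[of _ a1] conjI allI impI a1K)
    fix eps :: real and T xh uh
    assume eps: "eps > 0" and xh: "xh \<in> X" and uh: "uh \<in> feasible_inputs X U f T xh"
      and cl: "\<forall>k<T. orbit_dist ps Pis (traj f uh xh k, uh k) \<le> eps"
    define z where "z k = (traj f uh xh k, uh k)" for k
    have zK: "z k \<in> K" if "k < T" for k
      using uh that unfolding z_def K_def feasible_inputs_def by (auto simp: mem_Times_iff)
    have "\<forall>k. \<exists>j<ps. orbit_dist ps Pis (z k) = norm (z k - Pis j)"
      using orbit_dist_attained[OF p0] by blast
    then obtain jf where jf: "\<And>k. jf k < ps" "\<And>k. orbit_dist ps Pis (z k) = norm (z k - Pis (jf k))"
      by metis
    have close: "norm (z k - Pis (jf k)) \<le> eps" if "k < T" for k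
      using cl that jf(2)[of k] unfolding z_def by auto
    have sumeq: "(\<Sum>k<T. l (traj f uh xh k) (uh k)) = (\<Sum>k<T. L' (z k))"
      unfolding L'_def z_def by simp
    have a1_nonneg: "0 \<le> a1 eps" unfolding a1_def using kc4[of eps] eps Lc by simp
    have base: "0 \<le> (real T + real ps - 1) * e" using p0 e_nonneg by simp
    show "(\<Sum>k<T. l (traj f uh xh k) (uh k)) \<le> (real T + real ps - 1) * ell_star X U f l + real T * a1 eps"
    proof (cases "del \<le> eps")
      case True
      have "M \<le> a1 eps"
      proof -
        have "M \<le> Lc * del" using del unfolding Lc_def by (simp add: field_simps)
        also have "\<dots> \<le> Lc * eps" using True Lc by simp
        finally show ?thesis unfolding a1_def using kc4[of eps] eps by simp
      qed
      have "(\<Sum>k<T. L' (z k)) \<le> (\<Sum>k<T. a1 eps)"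
        by (rule sum_mono) (meson M(1) zK \<open>M \<le> a1 eps\<close> order_trans lessThan_iff)
      then show ?thesis using base sumeq unfolding e_def by simp
    next
      case False
      have step: "L' (z k) \<le> L' (Pis (jf k)) + a1 eps" if "k < T" for k
      proof -
        have "L' (z k) \<le> L' (Pis (jf k)) + g eps" using key[OF zK[OF that] jf(1) close[OF that]] .
        moreover have "0 \<le> Lc * eps" using Lc eps by simp
        ultimately show ?thesis unfolding a1_def by linarith
      qed
      have cons: "fst (Pis (Suc (jf k) mod ps)) = fst (Pis (jf (Suc k)))" if "Suc k < T" for k
      proof (rule ccontr)
        assume ne: "\<not> ?thesis"
        have "norm (z k - Pis (jf k)) < eta" using close[of k] that False unfolding del_def by simp
        then have "dist (f (fst (z k)) (snd (z k))) (f (fst (Pis (jf k))) (snd (Pis (jf k))))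
            < sep / 2" using eta(2) jf(1)[of k] zK[of k] that by (auto simp: dist_norm)
        then have 1: "norm (traj f uh xh (Suc k) - fst (Pis (Suc (jf k) mod ps))) < sep / 2"
          using orbf[OF jf(1)[of k]] unfolding z_def by (simp add: dist_norm)
        have "norm (fst (z (Suc k) - Pis (jf (Suc k)))) \<le> norm (z (Suc k) - Pis (jf (Suc k)))"
          using norm_fst_le[of "fst (z (Suc k) - Pis (jf (Suc k)))" "snd (z (Suc k) - Pis (jf (Suc k)))",
              unfolded prod.collapse] .
        also have "\<dots> < sep / 2" using close[OF that] False unfolding del_def by simp
        finally have 2: "norm (traj f uh xh (Suc k) - fst (Pis (jf (Suc k)))) < sep / 2"
          unfolding z_def by simp
        have "norm (fst (Pis (Suc (jf k) mod ps)) - fst (Pis (jf (Suc k)))) < sep"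
          using norm_triangle_lt[of "fst (Pis (Suc (jf k) mod ps)) - traj f uh xh (Suc k)"
              "traj f uh xh (Suc k) - fst (Pis (jf (Suc k)))" sep] 1 2
          by (simp add: norm_minus_commute)
        moreover have "sep \<le> norm (fst (Pis (Suc (jf k) mod ps)) - fst (Pis (jf (Suc k))))"
          using sep_le[OF _ jf(1) ne] p0 by simp
        ultimately show False by simp
      qed
      have "(\<Sum>k<T. L' (z k)) \<le> (\<Sum>k<T. L' (Pis (jf k)) + a1 eps)"
        by (rule sum_mono) (use step in auto)
      also have "\<dots> = (\<Sum>k<T. L' (Pis (jf k))) + real T * a1 eps" by (simp add: sum.distrib)
      also have "(\<Sum>k<T. L' (Pis (jf k))) \<le> (real T + real ps - 1) * e"
      proof (cases T)
        case 0 then show ?thesis using base by simp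
      next
        case (Suc n)
        have "(\<Sum>k<T. L' (Pis (jf k))) = (\<Sum>k<T. e + (lam (fst (Pis (Suc (jf k) mod ps))) - lam (fst (Pis (jf k)))))"
          by (rule sum.cong) (use F2 jf(1) in auto)
        also have "\<dots> = real T * e + (\<Sum>k<Suc n. (lam (fst (Pis (Suc (jf k) mod ps))) - lam (fst (Pis (jf k)))))"
          using Suc by (simp add: sum.distrib)
        also have "(\<Sum>k<Suc n. (lam (fst (Pis (Suc (jf k) mod ps))) - lam (fst (Pis (jf k)))))
            = lam (fst (Pis (Suc (jf n) mod ps))) - lam (fst (Pis (jf 0)))"
          by (rule telescope) (use cons Suc in \<open>auto simp: z_def\<close>)
        also have "\<dots> \<le> (real ps - 1) * e" using F3[OF _ jf(1)] p0 by simp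
        finally show ?thesis by (simp add: algebra_simps)
      qed
      finally show ?thesis using sumeq unfolding e_def by simp
    qed
  qed
qed

end
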